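(* Let $0\le x\le1$, $0\le y\le1$ and $0<\alpha<\infty$. Then $$\sqrt{xy}+\sqrt{(1-x)(1-y)}\le 1+\frac12(\alpha-1)x+\frac12\Big(\frac1\alpha-1\Big)y.$$ *)

theory Defs
  imports Complex_Main
begin

end

theory Submission
  imports Defs
begin

lemma amgm: fixes a b :: real assumes "0 \<le> a" "0 \<le> b" shows "sqrt (a*b) \<le> (a+b)/2"
proof -
  have "(sqrt a - sqrt b)^2 \<ge> 0" by simp
  hence "2 * (sqrt a * sqrt b) \<le> (sqrt a)^2 + (sqrt b)^2" by (simp add: power2_diff)
  thus ?thesis using assms by (simp add: real_sqrt_mult)
qed

theorem lemma1:
  fixes x y \<alpha> :: real
  assumes "0 \<le> x" "x \<le> 1" "0 \<le> y" "y \<le> 1" "0 < \<alpha>"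
  shows "sqrt (x * y) + sqrt ((1 - x) * (1 - y))
           \<le> 1 + (1/2) * (\<alpha> - 1) * x + (1/2) * (1 / \<alpha> - 1) * y"
proof -
  have e: "x * y = (\<alpha>*x) * (y/\<alpha>)" using assms by simp
  have 1: "sqrt (x*y) \<le> (\<alpha>*x + y/\<alpha>)/2" unfolding e
    by (rule amgm) (use assms in auto)
  have 2: "sqrt ((1 - x) * (1 - y)) \<le> ((1-x)+(1-y))/2"
    by (rule amgm) (use assms in auto)
  have "1 + (1/2) * (\<alpha> - 1) * x + (1/2) * (1 / \<alpha> - 1) * y = (\<alpha>*x + y/\<alpha>)/2 + ((1-x)+(1-y))/2"
    by (simp add: field_simps)
  thus ?thesis using 1 2 by linarith
qed

end
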